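(* For every finite rooted ordered tree $\mathbf{t}$ and every $k\in\mathbb{N}^*$, \[ 0\le D_k(\mathbf{t})-\mathcal{D}_k(\mathbf{t})\le|\mathbf{t}|^k. \]
   Context: For a finite rooted ordered tree $\mathbf{t}$ with root $\emptyset$, $|\mathbf{t}|$ is its number of nodes and $d$ the graph distance. For $\mathbf{u}=(u_1,\dots,u_k)\in\mathbf{t}^k$, $\mathfrak{m}(\mathbf{u})$ is the most recent common ancestor of $u_1,\dots,u_k$, and $D_k(\mathbf{t})=\sum_{\mathbf{u}\in\mathbf{t}^k}d(\emptyset,\mathfrak{m}(\mathbf{u}))$. The contour process $C^{\mathbf{t}}$ is the continuous function on $[0,2|\mathbf{t}|]$ giving the distance to the root of a particle that starts at the root and traverses each edge (of length 1) at unit speed, visiting the nodes in depth-first lexicographic order and returning to the root at time $2|\mathbf{t}|-2$; $C^{\mathbf{t}}=0$ on $[2|\mathbf{t}|-2,2|\mathbf{t}|]$. For a function $h$ and reals $s,t$ in its domain, $m_h(s,t)=\inf_{u\in[s\wedge t,s\vee t]}h(u)$. For $x=(x_1,\dots,x_k)$, $x_{(1)}\le\dots\le x_{(k)}$ is its order statistic, and $\mathcal{D}_k(\mathbf{t})=\int_{[0,|\mathbf{t}|]^k}m_{C^{\mathbf{t}}}(2x_{(1)},2x_{(k)})\,dx$ (for $k=1$ this is $\int_0^{|\mathbf{t}|}C^{\mathbf{t}}(2x)dx$). *)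

theory Defs
  imports "HOL-Analysis.Analysis"
begin

datatype otree = Node "otree list"

text \<open>Ulam--Harris node set: the root is the empty word, the i-th child of u is u@[i].
  The distance of a node to the root is the length of its word.\<close>
function nodes :: "otree \<Rightarrow> nat list set" where
  "nodes (Node ts) = insert [] (\<Union>i<length ts. (Cons i) ` nodes (ts ! i))"
  by pat_completeness auto
termination
  by (relation "Wellfounded.measure size") (auto simp: less_Suc_eq_le intro!: size_list_estimation' nth_mem)

definition tsize :: "otree \<Rightarrow> nat" where
  "tsize t = card (nodes t)"

text \<open>Longest common prefix; the most recent common ancestor of u_0,...,u_{k-1}.\<close>
fun lcp :: "nat list \<Rightarrow> nat list \<Rightarrow> nat list" where
  "lcp (x # xs) (y # ys) = (if x = y then x # lcp xs ys else [])"
| "lcp _ _ = []"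

definition mrca :: "(nat \<Rightarrow> nat list) \<Rightarrow> nat \<Rightarrow> nat list" where
  "mrca u k = foldl (\<lambda>acc i. lcp acc (u i)) (u 0) [1..<k]"

definition Dk :: "otree \<Rightarrow> nat \<Rightarrow> nat" where
  "Dk t k = (\<Sum>u\<in>PiE {..<k} (\<lambda>_. nodes t). length (mrca u k))"

text \<open>Heights visited by the contour walk at integer times 0,1,...,2|t|-2.\<close>
fun contour_seq :: "otree \<Rightarrow> nat list" where
  "contour_seq (Node ts) = 0 # concat (map (\<lambda>c. map Suc (contour_seq c) @ [0]) ts)"

text \<open>The contour process: linear interpolation of contour_seq, and 0 on [2|t|-2, 2|t|].\<close>
definition contour :: "otree \<Rightarrow> real \<Rightarrow> real" where
  "contour t s = (let c = contour_seq t; n = nat \<lfloor>s\<rfloor> in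
     if 0 \<le> s \<and> n + 1 < length c
     then real (c ! n) + (s - real n) * (real (c ! (n+1)) - real (c ! n))
     else 0)"

definition minf :: "(real \<Rightarrow> real) \<Rightarrow> real \<Rightarrow> real \<Rightarrow> real" where
  "minf h s t = Inf (h ` {min s t..max s t})"

definition DDk :: "otree \<Rightarrow> nat \<Rightarrow> real" where
  "DDk t k = integral\<^sup>L (PiM {..<k} (\<lambda>_. restrict_space lborel {0..real (tsize t)}))
     (\<lambda>x. minf (contour t) (2 * Min (x ` {..<k})) (2 * Max (x ` {..<k})))"

end

theory Submission
  imports Defs
begin

lemma finite_nodes: "finite (nodes t)"
  by (induction t rule: nodes.induct) auto

lemma Cons_in_nodes: "i # w \<in> nodes (Node ts) \<longleftrightarrow> i < length ts \<and> w \<in> nodes (ts!i)"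
  by auto

lemma tsize_Node: "tsize (Node ts) = 1 + (\<Sum>i<length ts. tsize (ts!i))"
proof -
  have "card (nodes (Node ts)) = 1 + card (\<Union>i<length ts. (Cons i) ` nodes (ts ! i))"
    by (subst nodes.simps, subst card_insert_disjoint) (auto simp: finite_nodes)
  also have "card (\<Union>i<length ts. (Cons i) ` nodes (ts ! i)) = (\<Sum>i<length ts. card ((Cons i) ` nodes (ts ! i)))"
    by (rule card_UN_disjoint) (auto simp: finite_nodes)
  also have "\<dots> = (\<Sum>i<length ts. tsize (ts!i))"
    by (simp add: card_image tsize_def)
  finally show ?thesis by (simp add: tsize_def)
qed

lemma tsize_pos: "tsize t \<ge> 1"
  by (cases t) (simp add: tsize_Node)

lemma tsize_Cons: "tsize (Node (c#ts)) = tsize c + tsize (Node ts)"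
  unfolding tsize_Node length_Cons sum.lessThan_Suc_shift by simp

lemma otree_induct2:
  assumes "P (Node [])" "\<And>c ts. P c \<Longrightarrow> P (Node ts) \<Longrightarrow> P (Node (c#ts))"
  shows "P t"
proof (induction t rule: measure_induct_rule[of size])
  case (less t)
  show ?case
  proof (cases t)
    case (Node ts)
    show ?thesis
    proof (cases ts)
      case Nil then show ?thesis using Node assms(1) by simp
    next
      case (Cons c ts')
      have "P c" by (rule less) (simp add: Node Cons)
      moreover have "P (Node ts')" by (rule less) (simp add: Node Cons)
      ultimately show ?thesis using assms(2) Node Cons by simp
    qed
  qed
qed

lemma cs_Cons[simp]: "contour_seq (Node (c#ts)) = 0 # map Suc (contour_seq c) @ contour_seq (Node ts)"
  by simp

lemma cs_Nil[simp]: "contour_seq (Node []) = [0]"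
  by simp

declare contour_seq.simps[simp del]

lemma cs_length: "length (contour_seq t) + 1 = 2 * tsize t"
proof (induction t rule: otree_induct2)
  case 1 then show ?case by (simp add: tsize_Node)
next
  case (2 c ts) then show ?case by (simp add: tsize_Cons)
qed

lemma cs_ne: "contour_seq t \<noteq> []"
  by (cases t) (simp add: contour_seq.simps)

lemma cs_hd: "contour_seq t ! 0 = 0"
  by (cases t) (simp add: contour_seq.simps)

lemma nth_dec: "i < 1 + length a + length b \<Longrightarrow>
  (0 # map Suc a @ b) ! i = (if i = 0 then 0 else if i \<le> length a then Suc (a!(i-1)) else b!(i - length a - 1))"
  by (cases i) (auto simp: nth_append)

lemma cs_last: "contour_seq t ! (length (contour_seq t) - 1) = 0"
proof (induction t rule: otree_induct2)
  case 1 then show ?case by simp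
next
  case (2 c ts)
  let ?a = "contour_seq c" and ?b = "contour_seq (Node ts)"
  have lb: "length ?b \<ge> 1" using cs_ne[of "Node ts"] by (metis One_nat_def Suc_leI length_greater_0_conv)
  have "(0 # map Suc ?a @ ?b) ! (length ?a + length ?b) = ?b ! (length ?b - 1)"
    using lb by (subst nth_dec) auto
  then show ?case using 2 lb by simp
qed

definition steps :: "nat list \<Rightarrow> bool" where
  "steps c \<longleftrightarrow> (\<forall>i. Suc i < length c \<longrightarrow> (c!Suc i = Suc (c!i) \<or> c!i = Suc (c!Suc i)))"

lemma cs_steps: "steps (contour_seq t)"
proof (induction t rule: otree_induct2)
  case 1 then show ?case by (simp add: steps_def)
next
  case (2 c ts)
  let ?a = "contour_seq c" and ?b = "contour_seq (Node ts)"
  have a0: "?a ! 0 = 0" and b0: "?b ! 0 = 0" and al: "?a ! (length ?a - 1) = 0"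
    using cs_hd cs_last by auto
  have la: "length ?a \<ge> 1" "length ?b \<ge> 1" using cs_ne[of c] cs_ne[of "Node ts"]
    by (metis One_nat_def Suc_leI length_greater_0_conv)+
  show ?case unfolding steps_def cs_Cons
  proof (intro allI impI)
    fix i assume i: "Suc i < length (0 # map Suc ?a @ ?b)"
    have i': "Suc i < 1 + length ?a + length ?b" "i < 1 + length ?a + length ?b" using i by auto
    let ?c = "0 # map Suc ?a @ ?b"
    have e1: "?c ! Suc i = (if Suc i \<le> length ?a then Suc (?a!i) else ?b!(Suc i - length ?a - 1))"
      using nth_dec[OF i'(1)] by simp
    have e2: "?c ! i = (if i = 0 then 0 else if i \<le> length ?a then Suc (?a!(i-1)) else ?b!(i - length ?a - 1))"
      using nth_dec[OF i'(2)] by simp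
    consider "i = 0" | "0 < i" "Suc i \<le> length ?a" | "i = length ?a" | "i > length ?a" by linarith
    then show "?c ! Suc i = Suc (?c ! i) \<or> ?c ! i = Suc (?c ! Suc i)"
    proof cases
      case 1 then show ?thesis unfolding e1 e2 using a0 la by auto
    next
      case 2
      then have "Suc (i-1) < length ?a" by simp
      then have "?a ! Suc (i-1) = Suc (?a!(i-1)) \<or> ?a!(i-1) = Suc (?a ! Suc (i-1))"
        using "2.IH"(1) unfolding steps_def by blast
      then show ?thesis unfolding e1 e2 using 2 by (auto simp: Suc_diff_Suc)
    next
      case 3 then show ?thesis unfolding e1 e2 using al b0 la by auto
    next
      case 4
      then have "Suc (i - length ?a - 1) < length ?b" using i' by simp
      then have "?b ! Suc (i - length ?a - 1) = Suc (?b!(i - length ?a - 1)) \<or> ?b!(i - length ?a - 1) = Suc (?b ! Suc (i - length ?a - 1))"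
        using "2.IH"(2) unfolding steps_def by blast
      moreover have "Suc i - length ?a - 1 = Suc (i - length ?a - 1)" using 4 by simp
      ultimately show ?thesis unfolding e1 e2 using 4 by auto
    qed
  qed
qed

lemma foldl_lcp_Cons:
  "(\<forall>j\<in>set xs. u j = i # w j) \<Longrightarrow>
   foldl (\<lambda>acc j. lcp acc (u j)) (i # a) xs = i # foldl (\<lambda>acc j. lcp acc (w j)) a xs"
  by (induction xs arbitrary: a) auto

lemma mrca_Cons: "k \<ge> 1 \<Longrightarrow> (\<forall>j<k. u j = i # w j) \<Longrightarrow> mrca u k = i # mrca w k"
proof -
  assume k: "k \<ge> 1" and h: "\<forall>j<k. u j = i # w j"
  then have "u 0 = i # w 0" by auto
  then show ?thesis unfolding mrca_def using foldl_lcp_Cons[of "[1..<k]" u i w "w 0"] h by simp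
qed

lemma lcp_prefix: "(\<exists>r. a = lcp a b @ r) \<and> (\<exists>r. b = lcp a b @ r)"
  by (induction a b rule: lcp.induct) auto

lemma foldl_prefix:
  "(\<exists>r. acc = foldl (\<lambda>acc j. lcp acc (u j)) acc xs @ r) \<and>
   (\<forall>j\<in>set xs. \<exists>r. u j = foldl (\<lambda>acc j. lcp acc (u j)) acc xs @ r)"
proof (induction xs arbitrary: acc)
  case Nil then show ?case by simp
next
  case (Cons x xs)
  let ?F = "foldl (\<lambda>acc j. lcp acc (u j)) (lcp acc (u x)) xs"
  from Cons[of "lcp acc (u x)"] obtain r where r: "lcp acc (u x) = ?F @ r"
    and R: "\<forall>j\<in>set xs. \<exists>r. u j = ?F @ r" by auto
  obtain r1 r2 where "acc = lcp acc (u x) @ r1" "u x = lcp acc (u x) @ r2"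
    using lcp_prefix by metis
  then have "acc = ?F @ (r @ r1)" "u x = ?F @ (r @ r2)" using r by (metis append.assoc)+
  then show ?case using R by auto
qed

lemma mrca_prefix: "k \<ge> 1 \<Longrightarrow> j < k \<Longrightarrow> \<exists>r. u j = mrca u k @ r"
  unfolding mrca_def using foldl_prefix[of "u 0" u "[1..<k]"]
  by (cases "j = 0") auto

lemma Dk_Node:
  assumes k: "k \<ge> 1"
  shows "Dk (Node ts) k = (\<Sum>i<length ts. tsize (ts!i) ^ k + Dk (ts!i) k)"
proof -
  let ?K = "{..<k}" and ?N = "nodes (Node ts)" and ?m = "length ts"
  define Ni where "Ni i = nodes (ts!i)" for i
  define \<phi> where "\<phi> i w = restrict (\<lambda>j. i # w j) ?K" for i and w :: "nat \<Rightarrow> nat list"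
  define A where "A i = \<phi> i ` PiE ?K (\<lambda>_. Ni i)" for i
  have fin: "finite (PiE ?K (\<lambda>_. ?N))" by (simp add: finite_PiE finite_nodes)
  have finA: "finite (A i)" for i by (simp add: A_def Ni_def finite_PiE finite_nodes)
  have sub: "(\<Union>i<?m. A i) \<subseteq> PiE ?K (\<lambda>_. ?N)"
    by (auto simp: A_def \<phi>_def Ni_def PiE_iff)
  have zero: "length (mrca u k) = 0" if u: "u \<in> PiE ?K (\<lambda>_. ?N) - (\<Union>i<?m. A i)" for u
  proof (rule ccontr)
    assume "length (mrca u k) \<noteq> 0"
    then obtain x y where xy: "mrca u k = x # y" by (cases "mrca u k") auto
    have uj: "\<exists>r. u j = x # (y @ r)" if "j < k" for j
      using mrca_prefix[OF k that, of u] xy by auto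
    define w where "w = restrict (\<lambda>j. tl (u j)) ?K"
    have uj2: "u j = x # w j" if "j < k" for j
      using uj[OF that] that by (auto simp: w_def)
    have "u 0 \<in> ?N" using PiE_mem[of u ?K "\<lambda>_. ?N" 0] u k by auto
    then have xm: "x < ?m" using uj2[of 0] k by auto
    have wN: "w \<in> PiE ?K (\<lambda>_. Ni x)"
    proof -
      have "w j \<in> Ni x" if "j < k" for j
      proof -
        have "u j \<in> ?N" using PiE_mem[of u ?K "\<lambda>_. ?N" j] u that by auto
        then show ?thesis using uj2[OF that] Cons_in_nodes[of x "w j" ts] by (simp add: Ni_def)
      qed
      then show ?thesis by (auto simp: w_def)
    qed
    have "u = \<phi> x w"
    proof
      fix j show "u j = \<phi> x w j"
      proof (cases "j < k")
        case True then show ?thesis using uj2 by (simp add: \<phi>_def)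
      next
        case False
        have "u \<in> extensional ?K" using u by (auto simp: PiE_def)
        then show ?thesis using False by (simp add: \<phi>_def extensional_def)
      qed
    qed
    then have "u \<in> A x" using wN by (auto simp: A_def)
    then show False using u xm by auto
  qed
  have "Dk (Node ts) k = (\<Sum>u\<in>(\<Union>i<?m. A i). length (mrca u k))"
    unfolding Dk_def
    by (rule sum.mono_neutral_right[OF fin sub]) (use zero in auto)
  also have "\<dots> = (\<Sum>i<?m. \<Sum>u\<in>A i. length (mrca u k))"
  proof (rule sum.UNION_disjoint)
    show "finite {..<?m}" by simp
    show "\<forall>i\<in>{..<?m}. finite (A i)" using finA by simp
    show "\<forall>i\<in>{..<?m}. \<forall>j\<in>{..<?m}. i \<noteq> j \<longrightarrow> A i \<inter> A j = {}"
    proof (intro ballI impI)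
      fix i j :: nat assume "i \<noteq> j"
      show "A i \<inter> A j = {}"
      proof (rule ccontr)
        assume "A i \<inter> A j \<noteq> {}"
        then obtain v w where "\<phi> i v = \<phi> j w" by (auto simp: A_def)
        then have "\<phi> i v 0 = \<phi> j w 0" by simp
        then show False using k \<open>i \<noteq> j\<close> by (simp add: \<phi>_def)
      qed
    qed
  qed
  also have "\<dots> = (\<Sum>i<?m. tsize (ts!i) ^ k + Dk (ts!i) k)"
  proof (rule sum.cong[OF refl])
    fix i assume "i \<in> {..<?m}"
    have inj: "inj_on (\<phi> i) (PiE ?K (\<lambda>_. Ni i))"
    proof (rule inj_onI)
      fix v w assume v: "v \<in> PiE ?K (\<lambda>_. Ni i)" and w: "w \<in> PiE ?K (\<lambda>_. Ni i)" and e: "\<phi> i v = \<phi> i w"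
      have "v j = w j" if "j \<in> ?K" for j
        using fun_cong[OF e, of j] that by (simp add: \<phi>_def)
      then show "v = w" using v w by (auto intro: PiE_ext)
    qed
    have "(\<Sum>u\<in>A i. length (mrca u k)) = (\<Sum>w\<in>PiE ?K (\<lambda>_. Ni i). length (mrca (\<phi> i w) k))"
      unfolding A_def by (rule sum.reindex[OF inj, unfolded comp_def])
    also have "\<dots> = (\<Sum>w\<in>PiE ?K (\<lambda>_. Ni i). 1 + length (mrca w k))"
    proof (rule sum.cong[OF refl])
      fix w assume "w \<in> PiE ?K (\<lambda>_. Ni i)"
      have "mrca (\<phi> i w) k = i # mrca w k"
        by (rule mrca_Cons[OF k]) (auto simp: \<phi>_def)
      then show "length (mrca (\<phi> i w) k) = 1 + length (mrca w k)" by simp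
    qed
    also have "\<dots> = card (PiE ?K (\<lambda>_. Ni i)) + Dk (ts!i) k"
      unfolding sum.distrib by (simp add: Dk_def Ni_def)
    also have "card (PiE ?K (\<lambda>_. Ni i)) = tsize (ts!i) ^ k"
      by (simp add: card_PiE Ni_def tsize_def)
    finally show "(\<Sum>u\<in>A i. length (mrca u k)) = tsize (ts!i) ^ k + Dk (ts!i) k" .
  qed
  finally show ?thesis .
qed

lemma Dk_Cons: "k \<ge> 1 \<Longrightarrow> Dk (Node (c#ts)) k = tsize c ^ k + Dk c k + Dk (Node ts) k"
  unfolding Dk_Node length_Cons sum.lessThan_Suc_shift by simp

lemma Dk_Nil: "k \<ge> 1 \<Longrightarrow> Dk (Node []) k = 0"
  by (simp add: Dk_Node)

definition exc :: "nat list \<Rightarrow> (nat \<times> nat) set" where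
  "exc c = {(p,q). p < q \<and> q < length c \<and> c!p = c!q \<and> (\<forall>i. p < i \<and> i < q \<longrightarrow> c!q < c!i)}"

lemma exc_finite: "finite (exc c)"
proof -
  have "exc c \<subseteq> {..<length c} \<times> {..<length c}" by (auto simp: exc_def)
  then show ?thesis by (rule finite_subset) simp
qed

lemma exc_single: "exc [x] = {}"
  by (auto simp: exc_def)

lemma exc_dec:
  assumes b: "b \<noteq> []" "b!0 = 0"
  shows "exc (0 # map Suc a @ b) = insert (0, Suc (length a))
     ((\<lambda>(p,q). (Suc p, Suc q)) ` exc a \<union> (\<lambda>(p,q). (p + Suc (length a), q + Suc (length a))) ` exc b)"
  (is "exc ?c = ?R")
proof -
  let ?la = "length a"
  have cn: "?c ! i = (if i = 0 then 0 else if i \<le> ?la then Suc (a!(i-1)) else b!(i - ?la - 1))"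
    if "i < length ?c" for i
    using nth_dec[of i a b] that by simp
  have lc: "length ?c = Suc (?la + length b)" by simp
  show ?thesis
  proof (intro equalityI subsetI)
    fix e assume e: "e \<in> exc ?c"
    obtain p q where pq: "e = (p,q)" by (cases e)
    have pq1: "p < q" "q < length ?c" "?c!p = ?c!q" "\<And>i. p < i \<Longrightarrow> i < q \<Longrightarrow> ?c!q < ?c!i"
      using e pq by (auto simp: exc_def)
    consider "p = 0" | "0 < p" "p \<le> ?la" | "p > ?la" by linarith
    then show "e \<in> ?R"
    proof cases
      case 1
      have "q = Suc ?la"
      proof (rule ccontr)
        assume "q \<noteq> Suc ?la"
        then consider "q \<le> ?la" | "q > Suc ?la" by linarith
        then show False
        proof cases
          case 1 then show False using pq1(1-3) `p = 0` cn[of p] cn[of q] by (auto split: if_splits)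
        next
          case 2
          have "?c ! Suc ?la = 0" using cn[of "Suc ?la"] lc 2 pq1(2) b by simp
          then show False using pq1(4)[of "Suc ?la"] `p = 0` pq1(3) cn[of 0] 2 by simp
        qed
      qed
      then show ?thesis using pq 1 by simp
    next
      case 2
      have qa: "q \<le> ?la"
      proof (rule ccontr)
        assume "\<not> q \<le> ?la"
        then consider "q = Suc ?la" | "q > Suc ?la" by linarith
        then show False
        proof cases
          case 1 then show False using pq1(1-3) 2 cn[of p] cn[of q] b by (auto split: if_splits)
        next
          case 3: 2
          have "?c ! Suc ?la = 0" using cn[of "Suc ?la"] lc 3 pq1(2) b by simp
          then show False using pq1(4)[of "Suc ?la"] 2 3 by simp
        qed
      qed
      have "(p - 1, q - 1) \<in> exc a"
        unfolding exc_def
      proof (clarify, intro conjI allI impI)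
        show "p - 1 < q - 1" using pq1(1) 2 by simp
        show "q - 1 < length a" using qa pq1(1) 2 by simp
        show "a ! (p - 1) = a ! (q - 1)" using pq1 2 qa cn[of p] cn[of q] by simp
        fix i assume i: "p - 1 < i \<and> i < q - 1"
        then have "p < Suc i" "Suc i < q" using 2 by auto
        then have "?c ! q < ?c ! Suc i" by (rule pq1(4))
        moreover have "Suc i \<le> ?la" using \<open>Suc i < q\<close> qa by simp
        ultimately show "a ! (q - 1) < a ! i"
          using pq1 2 qa cn[of q] cn[of "Suc i"] by simp
      qed
      moreover have "(p,q) = (\<lambda>(p,q). (Suc p, Suc q)) (p - 1, q - 1)" using 2 pq1 by simp
      ultimately show ?thesis using pq by blast
    next
      case 3
      have "(p - Suc ?la, q - Suc ?la) \<in> exc b"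
        unfolding exc_def
      proof (clarify, intro conjI allI impI)
        show "p - Suc ?la < q - Suc ?la" using pq1(1) 3 by simp
        show "q - Suc ?la < length b" using pq1(1,2) 3 by simp
        show "b ! (p - Suc ?la) = b ! (q - Suc ?la)" using pq1 3 cn[of p] cn[of q] by simp
        fix i assume i: "p - Suc ?la < i \<and> i < q - Suc ?la"
        then have "p < i + Suc ?la" "i + Suc ?la < q" using 3 by auto
        then have "?c ! q < ?c ! (i + Suc ?la)" by (rule pq1(4))
        moreover have "i + Suc ?la < length ?c" using \<open>i + Suc ?la < q\<close> pq1(2) by simp
        ultimately show "b ! (q - Suc ?la) < b ! i"
          using pq1 3 cn[of q] cn[of "i + Suc ?la"] by simp
      qed
      moreover have "(p,q) = (\<lambda>(p,q). (p + Suc ?la, q + Suc ?la)) (p - Suc ?la, q - Suc ?la)" using 3 pq1 by simp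
      ultimately show ?thesis using pq by blast
    qed
  next
    fix e assume e: "e \<in> ?R"
    then consider "e = (0, Suc ?la)" | "e \<in> (\<lambda>(p,q). (Suc p, Suc q)) ` exc a"
      | "e \<in> (\<lambda>(p,q). (p + Suc ?la, q + Suc ?la)) ` exc b" by blast
    then show "e \<in> exc ?c"
    proof cases
      case 1
      have "?c ! Suc ?la = 0" using cn[of "Suc ?la"] b by (simp add: lc)
      moreover have "0 < ?c ! i" if "0 < i" "i < Suc ?la" for i using cn[of i] that by simp
      ultimately show ?thesis using 1 b by (auto simp: exc_def)
    next
      case 2
      then obtain p q where pq: "(p,q) \<in> exc a" "e = (Suc p, Suc q)" by auto
      have h: "p < q" "q < ?la" "a!p = a!q" "\<And>i. p < i \<Longrightarrow> i < q \<Longrightarrow> a!q < a!i"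
        using pq(1) by (auto simp: exc_def)
      have "?c ! Suc q < ?c ! i" if "Suc p < i" "i < Suc q" for i
        using h(4)[of "i - 1"] that h cn[of i] cn[of "Suc q"] by simp
      then show ?thesis using pq h cn[of "Suc p"] cn[of "Suc q"] by (auto simp: exc_def)
    next
      case 3
      then obtain p q where pq: "(p,q) \<in> exc b" "e = (p + Suc ?la, q + Suc ?la)" by auto
      have h: "p < q" "q < length b" "b!p = b!q" "\<And>i. p < i \<Longrightarrow> i < q \<Longrightarrow> b!q < b!i"
        using pq(1) by (auto simp: exc_def)
      have "?c ! (q + Suc ?la) < ?c ! i" if "p + Suc ?la < i" "i < q + Suc ?la" for i
        using h(4)[of "i - Suc ?la"] that h cn[of i] cn[of "q + Suc ?la"] by simp
      then show ?thesis using pq h cn[of "p + Suc ?la"] cn[of "q + Suc ?la"] by (auto simp: exc_def)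
    qed
  qed
qed

lemma exc_sum_dec:
  fixes g :: "nat \<Rightarrow> 'b::comm_monoid_add"
  assumes b: "b \<noteq> []" "b!0 = 0"
  shows "(\<Sum>(p,q)\<in>exc (0 # map Suc a @ b). g (q - p)) =
     g (Suc (length a)) + (\<Sum>(p,q)\<in>exc a. g (q - p)) + (\<Sum>(p,q)\<in>exc b. g (q - p))"
proof -
  let ?la = "length a"
  let ?f1 = "\<lambda>(p,q). (Suc p, Suc q)" and ?f2 = "\<lambda>(p::nat,q::nat). (p + Suc ?la, q + Suc ?la)"
  have d1: "(0, Suc ?la) \<notin> ?f1 ` exc a \<union> ?f2 ` exc b" by auto
  have d2: "?f1 ` exc a \<inter> ?f2 ` exc b = {}" by (auto simp: exc_def)
  have i1: "inj_on ?f1 (exc a)" by (auto simp: inj_on_def)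
  have i2: "inj_on ?f2 (exc b)" by (auto simp: inj_on_def)
  have fin: "finite (?f1 ` exc a)" "finite (?f2 ` exc b)" by (auto intro: exc_finite)
  show ?thesis
    unfolding exc_dec[OF b]
    apply (subst sum.insert)
      apply (use fin d1 in auto)[2]
    apply (subst sum.union_disjoint[OF fin d2])
    apply (subst sum.reindex[OF i1])
    apply (subst sum.reindex[OF i2])
    apply (simp add: comp_def case_prod_beta add.assoc)
    done
qed

lemma pow_superadd: "k \<ge> 1 \<Longrightarrow> (x::nat)^k + y^k \<le> (x+y)^k"
proof (induction k rule: nat_induct_at_least)
  case base then show ?case by simp
next
  case (Suc k)
  have "x^Suc k + y^Suc k = x * x^k + y * y^k" by simp
  also have "\<dots> \<le> (x+y) * x^k + (x+y) * y^k" by (intro add_mono mult_right_mono) auto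
  also have "\<dots> = (x+y) * (x^k + y^k)" by (simp add: algebra_simps)
  also have "\<dots> \<le> (x+y) * (x+y)^k" using Suc.IH by (intro mult_left_mono) auto
  finally show ?case by simp
qed

lemma exc_cs_even: "(p,q) \<in> exc (contour_seq t) \<Longrightarrow> \<exists>L\<ge>1. q - p = 2 * L"
proof (induction t arbitrary: p q rule: otree_induct2)
  case 1 then show ?case by (simp add: exc_single)
next
  case (2 c ts)
  have b: "contour_seq (Node ts) \<noteq> []" "contour_seq (Node ts) ! 0 = 0" by (rule cs_ne, rule cs_hd)
  from "2.prems" consider "(p,q) = (0, Suc (length (contour_seq c)))"
    | "(p,q) \<in> (\<lambda>(p,q). (Suc p, Suc q)) ` exc (contour_seq c)"
    | "(p,q) \<in> (\<lambda>(p,q). (p + Suc (length (contour_seq c)), q + Suc (length (contour_seq c)))) ` exc (contour_seq (Node ts))"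
    unfolding cs_Cons exc_dec[OF b] by blast
  then show ?case
  proof cases
    case 1 then show ?thesis using cs_length[of c] tsize_pos[of c] by (intro exI[of _ "tsize c"]) auto
  next
    case 2 then show ?thesis using "2.IH"(1) by auto
  next
    case 3 then show ?thesis using "2.IH"(2) by auto
  qed
qed

lemma sum_exc_Dk: "k \<ge> 1 \<Longrightarrow> (\<Sum>(p,q)\<in>exc (contour_seq t). ((q-p) div 2)^k) = Dk t k"
proof (induction t rule: otree_induct2)
  case 1 then show ?case by (simp add: exc_single Dk_Nil)
next
  case (2 c ts)
  have b: "contour_seq (Node ts) \<noteq> []" "contour_seq (Node ts) ! 0 = 0" by (rule cs_ne, rule cs_hd)
  have "Suc (length (contour_seq c)) div 2 = tsize c" using cs_length[of c] by simp
  then show ?case unfolding cs_Cons exc_sum_dec[OF b, of "\<lambda>d. (d div 2)^k" "contour_seq c"] using 2 by (simp add: Dk_Cons)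
qed

lemma sum_exc_low: "k \<ge> 1 \<Longrightarrow> (\<Sum>(p,q)\<in>exc (contour_seq t). ((q-p) div 2)^k)
   \<le> (\<Sum>(p,q)\<in>exc (contour_seq t). ((q-p) div 2 - 1)^k) + (tsize t - 1)^k"
proof (induction t rule: otree_induct2)
  case 1 then show ?case by (simp add: exc_single)
next
  case (2 c ts)
  have b: "contour_seq (Node ts) \<noteq> []" "contour_seq (Node ts) ! 0 = 0" by (rule cs_ne, rule cs_hd)
  have e: "Suc (length (contour_seq c)) div 2 = tsize c" using cs_length[of c] by simp
  have sa: "tsize c ^ k + (tsize (Node ts) - 1)^k \<le> (tsize c + tsize (Node ts) - 1)^k"
    using pow_superadd[OF "2.prems", of "tsize c" "tsize (Node ts) - 1"] tsize_pos[of "Node ts"] by simp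
  show ?case unfolding cs_Cons exc_sum_dec[OF b, of "\<lambda>d. (d div 2)^k" "contour_seq c"]
      exc_sum_dec[OF b, of "\<lambda>d. (d div 2 - 1)^k" "contour_seq c"] e tsize_Cons
    using 2 sa by simp
qed

definition Cf :: "nat list \<Rightarrow> real \<Rightarrow> real" where
  "Cf c s = (let n = nat \<lfloor>s\<rfloor> in
     if 0 \<le> s \<and> n + 1 < length c
     then real (c ! n) + (s - real n) * (real (c ! (n+1)) - real (c ! n))
     else 0)"

lemma contour_Cf: "contour t = Cf (contour_seq t)"
  by (auto simp: contour_def Cf_def Let_def fun_eq_iff)

locale dyck =
  fixes c :: "nat list"
  assumes ne: "c \<noteq> []" and c0: "c!0 = 0" and cl: "c!(length c - 1) = 0" and st: "steps c"
begin

lemma step: "Suc i < length c \<Longrightarrow> c!Suc i = Suc (c!i) \<or> c!i = Suc (c!Suc i)"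
  using st by (auto simp: steps_def)

lemma seg0: "i + 1 < length c \<Longrightarrow> real i \<le> s \<Longrightarrow> s < real i + 1 \<Longrightarrow>
   Cf c s = real (c!i) + (s - real i) * (real (c!(i+1)) - real (c!i))"
proof -
  assume a: "i + 1 < length c" "real i \<le> s" "s < real i + 1"
  then have "\<lfloor>s\<rfloor> = int i" by (simp add: floor_eq_iff)
  then have "nat \<lfloor>s\<rfloor> = i" by simp
  then show ?thesis using a by (simp add: Cf_def Let_def)
qed

lemma at_int: "j < length c \<Longrightarrow> Cf c (real j) = real (c!j)"
proof -
  assume j: "j < length c"
  show ?thesis
  proof (cases "j + 1 < length c")
    case True then show ?thesis using seg0[of j "real j"] by simp
  next
    case False
    then have "j = length c - 1" using j by simp
    then show ?thesis using False cl by (simp add: Cf_def Let_def)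
  qed
qed

lemma seg: "i + 1 < length c \<Longrightarrow> real i \<le> s \<Longrightarrow> s \<le> real i + 1 \<Longrightarrow>
   Cf c s = real (c!i) + (s - real i) * (real (c!(i+1)) - real (c!i))"
proof -
  assume a: "i + 1 < length c" "real i \<le> s" "s \<le> real i + 1"
  show ?thesis
  proof (cases "s < real i + 1")
    case True then show ?thesis using seg0 a by simp
  next
    case False
    then have "s = real (i+1)" using a by simp
    then show ?thesis using at_int[of "i+1"] a by simp
  qed
qed

lemma seg_bounds: "i + 1 < length c \<Longrightarrow> real i \<le> s \<Longrightarrow> s \<le> real i + 1 \<Longrightarrow>
   min (real (c!i)) (real (c!(i+1))) \<le> Cf c s \<and> Cf c s \<le> max (real (c!i)) (real (c!(i+1)))"
proof -
  assume a: "i + 1 < length c" "real i \<le> s" "s \<le> real i + 1"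
  define \<theta> where "\<theta> = s - real i"
  have th: "0 \<le> \<theta>" "\<theta> \<le> 1" using a by (auto simp: \<theta>_def)
  have e: "Cf c s = (1 - \<theta>) * real (c!i) + \<theta> * real (c!(i+1))"
    using seg[OF a] by (simp add: \<theta>_def algebra_simps)
  let ?x = "real (c!i)" and ?y = "real (c!(i+1))"
  have "(1 - \<theta>) * ?x + \<theta> * ?y \<ge> (1 - \<theta>) * min ?x ?y + \<theta> * min ?x ?y"
    using th by (intro add_mono mult_left_mono) auto
  moreover have "(1 - \<theta>) * ?x + \<theta> * ?y \<le> (1 - \<theta>) * max ?x ?y + \<theta> * max ?x ?y"
    using th by (intro add_mono mult_left_mono) auto
  ultimately show ?thesis unfolding e by (simp add: algebra_simps)
qed

lemma seg_lip: "i + 1 < length c \<Longrightarrow> real i \<le> s \<Longrightarrow> s \<le> real i + 1 \<Longrightarrow>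
   real i \<le> s' \<Longrightarrow> s' \<le> real i + 1 \<Longrightarrow> \<bar>Cf c s - Cf c s'\<bar> \<le> \<bar>s - s'\<bar>"
proof -
  assume a: "i + 1 < length c" "real i \<le> s" "s \<le> real i + 1" "real i \<le> s'" "s' \<le> real i + 1"
  have "Cf c s - Cf c s' = (s - s') * (real (c!(i+1)) - real (c!i))"
    using seg[of i s] seg[of i s'] a by (simp add: algebra_simps)
  moreover have "\<bar>real (c!(i+1)) - real (c!i)\<bar> = 1" using step[of i] a by auto
  ultimately show ?thesis by (simp add: abs_mult)
qed

lemma Cf_nonneg: "Cf c s \<ge> 0"
proof (cases "0 \<le> s \<and> nat \<lfloor>s\<rfloor> + 1 < length c")
  case True
  let ?i = "nat \<lfloor>s\<rfloor>"
  have "real ?i \<le> s" "s \<le> real ?i + 1" using True by linarith+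
  moreover have "min (real (c!?i)) (real (c!(?i+1))) \<ge> 0" by simp
  ultimately show ?thesis using seg_bounds[of ?i s] True by linarith
next
  case False
  then have *: "(0 \<le> s \<and> nat \<lfloor>s\<rfloor> + 1 < length c) = False" by simp
  show ?thesis unfolding Cf_def Let_def by (simp only: * if_False order_refl)
qed

lemma Cf_out: "s \<le> 0 \<or> s \<ge> real (length c - 1) \<Longrightarrow> Cf c s = 0"
proof -
  assume a: "s \<le> 0 \<or> s \<ge> real (length c - 1)"
  show ?thesis
  proof (cases "s = 0")
    case True then show ?thesis using at_int[of 0] ne c0 by simp
  next
    case False
    have "\<not> (nat \<lfloor>s\<rfloor> + 1 < length c)" if "real (length c - 1) \<le> s"
    proof -
      have "int (length c - 1) \<le> \<lfloor>s\<rfloor>" using that by (simp add: le_floor_iff)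
      then have "length c - 1 \<le> nat \<lfloor>s\<rfloor>" by linarith
      then show ?thesis by linarith
    qed
    then have *: "(0 \<le> s \<and> nat \<lfloor>s\<rfloor> + 1 < length c) = False" using a False by auto
    show ?thesis unfolding Cf_def Let_def by (simp only: * if_False)
  qed
qed

lemma lip_aux: "\<forall>s s'. 0 \<le> s \<and> s \<le> s' \<and> s' \<le> real (length c - 1) \<and> s' \<le> real (nat \<lfloor>s\<rfloor>) + real j
   \<longrightarrow> \<bar>Cf c s - Cf c s'\<bar> \<le> s' - s"
proof (induction j)
  case 0
  { fix s s' :: real assume "0 \<le> s" "s \<le> s'" "s' \<le> real (nat \<lfloor>s\<rfloor>) + real 0"
    then have "s = s'" by linarith
    then have "\<bar>Cf c s - Cf c s'\<bar> \<le> s' - s" by simp }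
  then show ?case by blast
next
  case (Suc j)
  show ?case
  proof (intro allI impI)
    fix s s' :: real
    assume a: "0 \<le> s \<and> s \<le> s' \<and> s' \<le> real (length c - 1) \<and> s' \<le> real (nat \<lfloor>s\<rfloor>) + real (Suc j)"
    let ?i = "nat \<lfloor>s\<rfloor>"
    have i: "real ?i \<le> s" "s < real ?i + 1" using a by linarith+
    show "\<bar>Cf c s - Cf c s'\<bar> \<le> s' - s"
    proof (cases "s' \<le> real ?i + 1")
      case True
      show ?thesis
      proof (cases "?i + 1 < length c")
        case True2: True
        have "real ?i \<le> s'" using a i by linarith
        from seg_lip[OF True2 i(1) _ this True] i a show ?thesis by simp
      next
        case False
        then have "s = s'" using a i by linarith
        then show ?thesis by simp
      qed
    next
      case False
      define m where "m = real ?i + 1"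
      have m1: "?i + 1 < length c" using False a by linarith
      have "\<bar>Cf c s - Cf c m\<bar> \<le> \<bar>s - m\<bar>" using seg_lip[OF m1, of s m] i by (simp add: m_def)
      moreover have "nat \<lfloor>m\<rfloor> = ?i + 1" unfolding m_def by linarith
      then have mm: "real (nat \<lfloor>m\<rfloor>) = real ?i + 1" by simp
      then have "s' \<le> real (nat \<lfloor>m\<rfloor>) + real j" using a by linarith
      then have "\<bar>Cf c m - Cf c s'\<bar> \<le> s' - m" using Suc.IH[rule_format, of m s'] a False m_def by linarith
      ultimately show ?thesis using i False m_def by linarith
    qed
  qed
qed

lemma Cf_lip: "\<bar>Cf c s - Cf c s'\<bar> \<le> \<bar>s - s'\<bar>"
proof -
  define L where "L = real (length c - 1)"
  define cl where "cl x = max 0 (min L x)" for x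
  have L0: "L \<ge> 0" by (simp add: L_def)
  have clE: "Cf c (cl x) = Cf c x" for x
  proof (cases "0 \<le> x \<and> x \<le> L")
    case True then show ?thesis by (simp add: cl_def)
  next
    case False
    then have "cl x = 0 \<or> cl x = L" by (auto simp: cl_def)
    then have "Cf c (cl x) = 0" using Cf_out L_def by auto
    moreover have "Cf c x = 0" using Cf_out False L_def by auto
    ultimately show ?thesis by simp
  qed
  have main: "\<bar>Cf c x - Cf c y\<bar> \<le> y - x" if "0 \<le> x" "x \<le> y" "y \<le> L" for x y
  proof -
    obtain j :: nat where "real j \<ge> y" using real_arch_simple by blast
    then have "y \<le> real (nat \<lfloor>x\<rfloor>) + real j" using that by linarith
    moreover have "y \<le> real (length c - 1)" using that L_def by simp
    ultimately show ?thesis using lip_aux[of j, rule_format, of x y] that by linarith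
  qed
  have "\<bar>Cf c (cl s) - Cf c (cl s')\<bar> \<le> \<bar>cl s - cl s'\<bar>"
  proof (cases "cl s \<le> cl s'")
    case True
    have "0 \<le> cl s" "cl s' \<le> L" using L0 by (auto simp: cl_def)
    then show ?thesis using main[of "cl s" "cl s'"] True by simp
  next
    case False
    have "0 \<le> cl s'" "cl s \<le> L" using L0 by (auto simp: cl_def)
    then show ?thesis using main[of "cl s'" "cl s"] False by (simp add: abs_minus_commute)
  qed
  moreover have "\<bar>cl s - cl s'\<bar> \<le> \<bar>s - s'\<bar>" unfolding cl_def by (simp add: min_def max_def abs_if)
  ultimately show ?thesis unfolding clE by simp
qed

end

lemma minf_le: "a \<le> b \<Longrightarrow> s \<in> {a..b} \<Longrightarrow> (\<And>x. h x \<ge> 0) \<Longrightarrow> minf h a b \<le> h s"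
  unfolding minf_def
  by (rule cInf_lower) (auto intro: bdd_belowI[of _ 0])

lemma minf_ge: "a \<le> b \<Longrightarrow> (\<And>s. s \<in> {a..b} \<Longrightarrow> m \<le> h s) \<Longrightarrow> m \<le> minf h a b"
  unfolding minf_def
  by (rule cInf_greatest) auto

lemma minf_nonneg: "(\<And>x. h x \<ge> 0) \<Longrightarrow> minf h a b \<ge> 0"
  unfolding minf_def
  by (rule cInf_greatest) auto

lemma clamp_arith:
  fixes a b a' b' y :: real
  assumes "min a' b' \<le> y" "y \<le> max a' b'"
  shows "\<bar>y - max (min a b) (min (max a b) y)\<bar> \<le> \<bar>a - a'\<bar> + \<bar>b - b'\<bar>"
  using assms by (simp add: min_def max_def abs_if split: if_splits)

lemma minf_half:
  assumes nn: "\<And>x. h x \<ge> 0" and lip: "\<And>x y. \<bar>h x - h y\<bar> \<le> \<bar>x - y\<bar>"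
  shows "minf h a b - (\<bar>a - a'\<bar> + \<bar>b - b'\<bar>) \<le> minf h a' b'"
  unfolding minf_def
proof (rule cInf_greatest)
  show "h ` {min a' b'..max a' b'} \<noteq> {}" by simp
  fix z assume "z \<in> h ` {min a' b'..max a' b'}"
  then obtain y where y: "min a' b' \<le> y" "y \<le> max a' b'" and z: "z = h y" by auto
  define y' where "y' = max (min a b) (min (max a b) y)"
  have "y' \<in> {min a b..max a b}" by (auto simp: y'_def)
  then have "Inf (h ` {min a b..max a b}) \<le> h y'"
    by (intro cInf_lower) (auto intro: bdd_belowI[of _ 0] nn)
  moreover have "h y' \<le> h y + \<bar>y - y'\<bar>" using lip[of y' y] by linarith
  moreover have "\<bar>y - y'\<bar> \<le> \<bar>a - a'\<bar> + \<bar>b - b'\<bar>" unfolding y'_def by (rule clamp_arith[OF y])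
  ultimately show "Inf (h ` {min a b..max a b}) - (\<bar>a - a'\<bar> + \<bar>b - b'\<bar>) \<le> z" using z by linarith
qed

lemma minf_lip:
  assumes nn: "\<And>x. h x \<ge> 0" and lip: "\<And>x y. \<bar>h x - h y\<bar> \<le> \<bar>x - y\<bar>"
  shows "\<bar>minf h a b - minf h a' b'\<bar> \<le> \<bar>a - a'\<bar> + \<bar>b - b'\<bar>"
  using minf_half[OF nn lip, of a b a' b'] minf_half[OF nn lip, of a' b' a b] by linarith

lemma minf_cont:
  assumes nn: "\<And>x. h x \<ge> 0" and lip: "\<And>x y. \<bar>h x - h y\<bar> \<le> \<bar>x - y\<bar>"
  shows "continuous_on UNIV (\<lambda>x::real\<times>real. minf h (2 * fst x) (2 * snd x))"
proof (rule lipschitz_on_continuous_on, rule lipschitz_onI)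
  fix x y :: "real \<times> real"
  have "dist (minf h (2 * fst x) (2 * snd x)) (minf h (2 * fst y) (2 * snd y))
        \<le> \<bar>2 * fst x - 2 * fst y\<bar> + \<bar>2 * snd x - 2 * snd y\<bar>"
    using minf_lip[OF nn lip] by (simp add: dist_real_def)
  also have "\<dots> = 2 * dist (fst x) (fst y) + 2 * dist (snd x) (snd y)"
    unfolding dist_real_def by (auto simp: abs_if)
  also have "\<dots> \<le> 4 * dist x y" using dist_fst_le[of x y] dist_snd_le[of x y] by linarith
  finally show "dist (minf h (2 * fst x) (2 * snd x)) (minf h (2 * fst y) (2 * snd y)) \<le> 4 * dist x y" .
qed simp

context dyck
begin

lemma lower_pw:
  assumes s: "0 \<le> s1" "s1 \<le> s2"
  shows "real (card {e\<in>exc c. real (fst e) + 1 \<le> s1 \<and> s2 \<le> real (snd e) - 1}) \<le> minf (Cf c) s1 s2"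
proof -
  let ?S = "{e\<in>exc c. real (fst e) + 1 \<le> s1 \<and> s2 \<le> real (snd e) - 1}"
  let ?m = "minf (Cf c) s1 s2"
  have A: "real (c!p) + 1 \<le> Cf c s" if e: "(p,q) \<in> ?S" and sI: "s \<in> {s1..s2}" for p q s
  proof -
    have h: "p < q" "q < length c" "c!p = c!q" "\<And>i. p < i \<Longrightarrow> i < q \<Longrightarrow> c!q < c!i"
      "real p + 1 \<le> s1" "s2 \<le> real q - 1" using e by (auto simp: exc_def)
    let ?n = "nat \<lfloor>s\<rfloor>"
    have s0: "0 \<le> s" using sI s by auto
    have n1: "real ?n \<le> s" "s < real ?n + 1" using s0 by linarith+
    have "int p + 1 \<le> \<lfloor>s\<rfloor>" using h(5) sI by (simp add: le_floor_iff)
    then have i1: "p + 1 \<le> ?n" by linarith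
    have fl: "real_of_int \<lfloor>s\<rfloor> \<le> s" by linarith
    then have "real_of_int (\<lfloor>s\<rfloor> + 1) \<le> real_of_int (int q)" using h(6) sI by (simp; linarith)
    then have i2: "\<lfloor>s\<rfloor> + 1 \<le> int q" by (simp only: of_int_le_iff)
    have i3: "int ?n = \<lfloor>s\<rfloor>" using s0 by simp
    have "int (?n + 1) \<le> int q" using i2 i3 by simp
    then have "?n + 1 \<le> q" by (simp only: of_nat_le_iff)
    with i1 have int: "p < ?n" "?n < q" by auto
    have cn: "real (c!p) + 1 \<le> real (c!?n)" using h(4)[OF int] h(3) by simp
    show ?thesis
    proof (cases "?n + 1 < q")
      case True
      have "real (c!p) + 1 \<le> real (c!(?n+1))" using h(4)[of "?n+1"] True int h(3) by simp
      moreover have "min (real (c!?n)) (real (c!(?n+1))) \<le> Cf c s" using seg_bounds[of ?n s] n1 True h(2) by simp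
      ultimately show ?thesis using cn by linarith
    next
      case False
      then have "s = real ?n" using h(6) sI n1 by (simp, linarith)
      then show ?thesis using at_int[of ?n] cn int h(2) by simp
    qed
  qed
  have B: "inj_on (\<lambda>e. c!(fst e)) ?S"
  proof (rule inj_onI)
    fix e e' assume e: "e \<in> ?S" and e': "e' \<in> ?S" and eq: "c!(fst e) = c!(fst e')"
    obtain p q where pq: "e = (p,q)" by (cases e)
    obtain p' q' where pq': "e' = (p',q')" by (cases e')
    have h: "p < q" "q < length c" "c!p = c!q" "\<And>i. p < i \<Longrightarrow> i < q \<Longrightarrow> c!q < c!i"
      "real p + 1 \<le> s1" "s2 \<le> real q - 1" using e pq by (auto simp: exc_def)
    have h': "p' < q'" "q' < length c" "c!p' = c!q'" "\<And>i. p' < i \<Longrightarrow> i < q' \<Longrightarrow> c!q' < c!i"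
      "real p' + 1 \<le> s1" "s2 \<le> real q' - 1" using e' pq' by (auto simp: exc_def)
    have eq2: "c!p = c!p'" using eq pq pq' by simp
    have "p' < q" "p < q'" using h(5,6) h'(5,6) s by linarith+
    have pp: "p = p'"
    proof (rule ccontr)
      assume "p \<noteq> p'"
      then consider "p < p'" | "p' < p" by linarith
      then show False
      proof cases
        case 1 then show False using h(4)[of p'] \<open>p' < q\<close> h(3) eq2 by simp
      next
        case 2 then show False using h'(4)[of p] \<open>p < q'\<close> h'(3) eq2 by simp
      qed
    qed
    have "q = q'"
    proof (rule ccontr)
      assume "q \<noteq> q'"
      then consider "q < q'" | "q' < q" by linarith
      then show False
      proof cases
        case 1 then show False using h'(4)[of q] h(1) pp h(3) h'(3) by simp
      next
        case 2 then show False using h(4)[of q'] h'(1) pp h(3) h'(3) by simp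
      qed
    qed
    then show "e = e'" using pq pq' pp by simp
  qed
  have C: "(\<lambda>e. c!(fst e)) ` ?S \<subseteq> {..< nat \<lfloor>?m\<rfloor>}"
  proof
    fix x assume "x \<in> (\<lambda>e. c!(fst e)) ` ?S"
    then obtain p q where e: "(p,q) \<in> ?S" and x: "x = c!p" by auto
    have "real (c!p) + 1 \<le> ?m" using A[OF e] s by (intro minf_ge) auto
    then have "int (c!p) + 1 \<le> \<lfloor>?m\<rfloor>" by linarith
    then show "x \<in> {..< nat \<lfloor>?m\<rfloor>}" using x by simp
  qed
  have fin: "finite ?S" using exc_finite by simp
  have "card ?S = card ((\<lambda>e. c!(fst e)) ` ?S)" using card_image[OF B] by simp
  also have "\<dots> \<le> nat \<lfloor>?m\<rfloor>" using card_mono[OF _ C] by simp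
  finally have "real (card ?S) \<le> real (nat \<lfloor>?m\<rfloor>)" by simp
  also have "\<dots> \<le> ?m"
  proof -
    have "?m \<ge> 0" using minf_nonneg[of "Cf c" s1 s2] Cf_nonneg by blast
    then have "real (nat \<lfloor>?m\<rfloor>) = real_of_int \<lfloor>?m\<rfloor>" by simp
    then show ?thesis by linarith
  qed
  finally show ?thesis .
qed

end

context dyck
begin

lemma upper_level:
  assumes s: "0 \<le> s1" "s1 \<le> s2" and HM: "real H < minf (Cf c) s1 s2"
  shows "\<exists>e\<in>{e\<in>exc c. real (fst e) \<le> s1 \<and> s2 \<le> real (snd e)}. c!(fst e) = H"
proof -
  let ?m = "minf (Cf c) s1 s2"
  have Cgt: "real H < Cf c s" if "s \<in> {s1..s2}" for s
    using minf_le[OF s(2) that, of "Cf c"] Cf_nonneg HM by force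
  have s2lt: "s2 < real (length c - 1)"
  proof (rule ccontr)
    assume "\<not> ?thesis"
    then have "Cf c s2 = 0" using Cf_out by simp
    then show False using Cgt[of s2] s by simp
  qed
  define P where "P = {i. real i \<le> s1 \<and> c!i \<le> H}"
  define Q where "Q = {i. s2 \<le> real i \<and> i < length c \<and> c!i \<le> H}"
  have finP: "finite P"
  proof (rule finite_subset)
    show "P \<subseteq> {..<length c}" using s s2lt by (auto simp: P_def)
  qed simp
  have finQ: "finite Q" by (rule finite_subset[of _ "{..<length c}"]) (auto simp: Q_def)
  have P0: "0 \<in> P" using s c0 by (simp add: P_def)
  have Q0: "length c - 1 \<in> Q" using s2lt cl ne by (simp add: Q_def)
  define p where "p = Max P"
  define q where "q = Min Q"
  have pP: "p \<in> P" using Max_in[OF finP] P0 by (auto simp: p_def)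
  have qQ: "q \<in> Q" using Min_in[OF finQ] Q0 by (auto simp: q_def)
  have pmax: "i \<le> p" if "i \<in> P" for i using finP that by (simp add: p_def)
  have qmin: "q \<le> i" if "i \<in> Q" for i using finQ that by (simp add: q_def)
  have hp: "real p \<le> s1" "c!p \<le> H" using pP by (auto simp: P_def)
  have hq: "s2 \<le> real q" "q < length c" "c!q \<le> H" using qQ by (auto simp: Q_def)
  have inter: "H < c!i" if "p < i" "i < q" for i
  proof (rule ccontr)
    assume ci: "\<not> H < c!i"
    have il: "i < length c" using that hq by simp
    consider "real i \<le> s1" | "s2 \<le> real i" | "s1 < real i" "real i < s2" by linarith
    then show False
    proof cases
      case 1 then have "i \<in> P" using ci by (simp add: P_def)
      then show False using pmax that by fastforce
    next
      case 2 then have "i \<in> Q" using ci il by (simp add: Q_def)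
      then show False using qmin that by fastforce
    next
      case 3 then show False using Cgt[of "real i"] at_int[OF il] ci by simp
    qed
  qed
  have pq: "p \<le> q" using hp hq s by linarith
  have pq2: "p + 1 < q"
  proof (rule ccontr)
    assume "\<not> p + 1 < q"
    then consider "q = p" | "q = p + 1" using pq by linarith
    then show False
    proof cases
      case 1
      then have "s1 = real p" using hp hq s by linarith
      moreover have "p < length c" using hq 1 by simp
      ultimately have "Cf c s1 = real (c!p)" using at_int[of p] by simp
      then show False using Cgt[of s1] hp s by simp
    next
      case 2
      have "Cf c s1 \<le> max (real (c!p)) (real (c!(p+1)))"
        using seg_bounds[of p s1] hq 2 hp s by simp
      then show False using Cgt[of s1] hp hq 2 s by simp
    qed
  qed
  have cp: "c!p = H"
  proof -
    have "H < c!(p+1)" using inter[of "p+1"] pq2 by simp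
    moreover have "c!Suc p = Suc (c!p) \<or> c!p = Suc (c!Suc p)" using step[of p] pq2 hq by simp
    ultimately show ?thesis using hp by auto
  qed
  have cq: "c!q = H"
  proof -
    have "H < c!(q-1)" using inter[of "q-1"] pq2 by simp
    moreover have "c!Suc (q-1) = Suc (c!(q-1)) \<or> c!(q-1) = Suc (c!Suc (q-1))" using step[of "q-1"] pq2 hq by simp
    moreover have "Suc (q-1) = q" using pq2 by simp
    ultimately show ?thesis using hq by auto
  qed
  have "(p,q) \<in> exc c" unfolding exc_def using pq2 hq cp cq inter by auto
  then show ?thesis using hp hq cp by force
qed

lemma upper_pw:
  assumes s: "0 \<le> s1" "s1 \<le> s2"
  shows "minf (Cf c) s1 s2 \<le> real (card {e\<in>exc c. real (fst e) \<le> s1 \<and> s2 \<le> real (snd e)})"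
proof -
  let ?S = "{e\<in>exc c. real (fst e) \<le> s1 \<and> s2 \<le> real (snd e)}"
  let ?m = "minf (Cf c) s1 s2"
  have m0: "?m \<ge> 0" using minf_nonneg[of "Cf c" s1 s2] Cf_nonneg by blast
  have sub: "{..<nat \<lceil>?m\<rceil>} \<subseteq> (\<lambda>e. c!(fst e)) ` ?S"
  proof
    fix x assume "x \<in> {..<nat \<lceil>?m\<rceil>}"
    then have "int x < \<lceil>?m\<rceil>" by simp
    then have "real_of_int (int x) < ?m" by (simp only: less_ceiling_iff)
    then have "real x < ?m" by simp
    then obtain e where "e \<in> ?S" "c!(fst e) = x" using upper_level[OF s] by blast
    then show "x \<in> (\<lambda>e. c!(fst e)) ` ?S" by force
  qed
  have fin: "finite ?S" using exc_finite by simp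
  have "nat \<lceil>?m\<rceil> \<le> card ((\<lambda>e. c!(fst e)) ` ?S)" using card_mono[OF _ sub] fin by simp
  also have "\<dots> \<le> card ?S" using card_image_le[OF fin] by simp
  finally have "real (nat \<lceil>?m\<rceil>) \<le> real (card ?S)" by simp
  moreover have "?m \<le> real (nat \<lceil>?m\<rceil>)" using m0 by linarith
  ultimately show ?thesis by linarith
qed

end

lemma box_facts:
  fixes n \<alpha> \<beta> :: real and K :: "nat set"
  assumes K: "finite K" and ab: "0 \<le> \<alpha>" "\<alpha> \<le> \<beta>" "\<beta> \<le> n"
  defines "M \<equiv> PiM K (\<lambda>_. restrict_space lborel {0..n})"
  shows "PiE K (\<lambda>_. {\<alpha>..\<beta>}) \<in> sets M"
    and "integrable M (indicator (PiE K (\<lambda>_. {\<alpha>..\<beta>})) :: _ \<Rightarrow> real)"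
    and "integral\<^sup>L M (indicator (PiE K (\<lambda>_. {\<alpha>..\<beta>})) :: _ \<Rightarrow> real) = (\<beta> - \<alpha>) ^ card K"
proof -
  interpret product_sigma_finite "\<lambda>_. restrict_space lborel {0..n}"
    by (rule product_sigma_finite.intro, rule sigma_finite_measure_restrict_space[OF lborel.sigma_finite_measure_axioms], simp)
  have s1: "{\<alpha>..\<beta>} \<in> sets (restrict_space lborel {0..n})"
    using ab by (subst sets_restrict_space_iff) (simp_all add: subset_iff)
  show sB: "PiE K (\<lambda>_. {\<alpha>..\<beta>}) \<in> sets M"
    unfolding M_def by (rule sets_PiM_I_finite[OF K]) (rule s1)
  have em1: "emeasure (restrict_space lborel {0..n}) {\<alpha>..\<beta>} = ennreal (\<beta> - \<alpha>)"
    using ab by (subst emeasure_restrict_space) (simp_all add: subset_iff)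
  have em: "emeasure M (PiE K (\<lambda>_. {\<alpha>..\<beta>})) = ennreal ((\<beta> - \<alpha>) ^ card K)"
    unfolding M_def using ab
    by (subst emeasure_PiM[OF K]) (use s1 em1 in \<open>simp_all add: ennreal_power\<close>)
  show "integrable M (indicator (PiE K (\<lambda>_. {\<alpha>..\<beta>})) :: _ \<Rightarrow> real)"
  proof -
    have "integrable M (\<lambda>x. indicator (PiE K (\<lambda>_. {\<alpha>..\<beta>})) x *\<^sub>R (1::real))"
      using em by (intro integrable_indicator[OF sB]) simp
    moreover have "(\<lambda>x. indicator (PiE K (\<lambda>_. {\<alpha>..\<beta>})) x *\<^sub>R (1::real)) = indicator (PiE K (\<lambda>_. {\<alpha>..\<beta>}))"
      by (simp add: fun_eq_iff)
    ultimately show ?thesis by simp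
  qed
  have sub: "PiE K (\<lambda>_. {\<alpha>..\<beta>}) \<inter> space M = PiE K (\<lambda>_. {\<alpha>..\<beta>})"
    using sets.sets_into_space[OF sB] by auto
  show "integral\<^sup>L M (indicator (PiE K (\<lambda>_. {\<alpha>..\<beta>})) :: _ \<Rightarrow> real) = (\<beta> - \<alpha>) ^ card K"
    using ab by (simp add: sub measure_def em)
qed

lemma meas_comp: "i \<in> K \<Longrightarrow> (\<lambda>x. x i) \<in> borel_measurable (PiM K (\<lambda>_. restrict_space lborel {0..(n::real)}))"
proof -
  assume i: "i \<in> K"
  have "(\<lambda>x::real. x) \<in> borel_measurable (restrict_space lborel {0..n})"
    by (rule measurable_restrict_space1) simp
  from measurable_compose[OF measurable_component_singleton[OF i] this]
  show ?thesis by simp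
qed

lemma card_filter_sum: "finite A \<Longrightarrow> real (card {e\<in>A. P e}) = (\<Sum>e\<in>A. if P e then 1 else 0)"
proof -
  assume A: "finite A"
  have "(\<Sum>e\<in>A. if P e then 1 else 0::real) = (\<Sum>e\<in>{e\<in>A. P e}. 1)"
    by (rule sum.inter_filter[symmetric]) (rule A)
  then show ?thesis by simp
qed

theorem lemma7p1:
  fixes t :: otree and k :: nat
  assumes "k \<ge> 1"
  shows "0 \<le> real (Dk t k) - DDk t k \<and> real (Dk t k) - DDk t k \<le> real (tsize t) ^ k"
proof -
  define c where "c = contour_seq t"
  define n where "n = tsize t"
  interpret dyck c
    using cs_last[of t] by unfold_locales (simp_all add: c_def cs_ne cs_hd cs_steps)
  define K where "K = {..<k}"
  have K0: "0 \<in> K" using assms by (simp add: K_def)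
  have K: "finite K" "K \<noteq> {}" "card K = k" using K0 by (auto simp: K_def)
  define M where "M = PiM K (\<lambda>_. restrict_space lborel {0..real n})"
  define f where "f x = minf (Cf c) (2 * Min (x ` K)) (2 * Max (x ` K))" for x :: "nat \<Rightarrow> real"
  have DD: "DDk t k = integral\<^sup>L M f"
    by (simp add: DDk_def M_def f_def[abs_def] K_def n_def contour_Cf c_def)
  define lo where "lo e = PiE K (\<lambda>_. {(real (fst e) + 1)/2 .. (real (snd e) - 1)/2})" for e :: "nat \<times> nat"
  define up where "up e = PiE K (\<lambda>_. {real (fst e)/2 .. real (snd e)/2})" for e :: "nat \<times> nat"
  define L where "L x = (\<Sum>e\<in>exc c. indicator (lo e) x :: real)" for x
  define U where "U x = (\<Sum>e\<in>exc c. indicator (up e) x :: real)" for x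
  define d where "d e = (snd e - fst e) div 2" for e :: "nat \<times> nat"
  have len: "length c + 1 = 2 * n" using cs_length by (simp add: c_def n_def)
  have ef: "fst e < snd e" "snd e < length c" "\<exists>Lv\<ge>1. snd e - fst e = 2 * Lv" if "e \<in> exc c" for e
    using that exc_cs_even[of "fst e" "snd e" t] by (auto simp: exc_def c_def)
  have lo_int: "integrable M (indicator (lo e) :: _ \<Rightarrow> real) \<and> integral\<^sup>L M (indicator (lo e) :: _ \<Rightarrow> real) = real ((d e - 1) ^ k)"
    if e: "e \<in> exc c" for e
  proof -
    obtain Lv where Lv: "Lv \<ge> 1" "snd e - fst e = 2 * Lv" using ef(3)[OF e] by blast
    have q: "real (snd e) = real (fst e) + 2 * real Lv" using Lv ef(1)[OF e] by linarith
    have de: "d e = Lv" using Lv by (simp add: d_def)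
    have ab: "0 \<le> (real (fst e) + 1)/2" "(real (fst e) + 1)/2 \<le> (real (snd e) - 1)/2" "(real (snd e) - 1)/2 \<le> real n"
      using q Lv ef(2)[OF e] len by auto
    have "(real (snd e) - 1)/2 - (real (fst e) + 1)/2 = real (Lv - 1)" using q Lv by (simp add: of_nat_diff field_simps)
    then show ?thesis using box_facts[OF K(1) ab] K(3) de by (simp add: lo_def M_def)
  qed
  have up_int: "integrable M (indicator (up e) :: _ \<Rightarrow> real) \<and> integral\<^sup>L M (indicator (up e) :: _ \<Rightarrow> real) = real (d e ^ k)"
    if e: "e \<in> exc c" for e
  proof -
    obtain Lv where Lv: "Lv \<ge> 1" "snd e - fst e = 2 * Lv" using ef(3)[OF e] by blast
    have q: "real (snd e) = real (fst e) + 2 * real Lv" using Lv ef(1)[OF e] by linarith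
    have de: "d e = Lv" using Lv by (simp add: d_def)
    have ab: "0 \<le> real (fst e)/2" "real (fst e)/2 \<le> real (snd e)/2" "real (snd e)/2 \<le> real n"
      using q Lv ef(2)[OF e] len by auto
    have "real (snd e)/2 - real (fst e)/2 = real Lv" using q by (simp add: field_simps)
    then show ?thesis using box_facts[OF K(1) ab] K(3) de by (simp add: up_def M_def)
  qed
  have Lint: "integrable M L" unfolding L_def[abs_def] using Bochner_Integration.integrable_sum[where I="exc c" and M=M and f="\<lambda>e. indicator (lo e)"] lo_int by blast
  have Uint: "integrable M U" unfolding U_def[abs_def] using Bochner_Integration.integrable_sum[where I="exc c" and M=M and f="\<lambda>e. indicator (up e)"] up_int by blast
  have IL: "integral\<^sup>L M L = real (\<Sum>e\<in>exc c. (d e - 1) ^ k)"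
  proof -
    have "integral\<^sup>L M (\<lambda>x. \<Sum>e\<in>exc c. indicator (lo e) x :: real) = (\<Sum>e\<in>exc c. integral\<^sup>L M (indicator (lo e)))"
      using Bochner_Integration.integral_sum[where I="exc c" and M=M and f="\<lambda>e. indicator (lo e)"] lo_int by blast
    also have "\<dots> = (\<Sum>e\<in>exc c. real ((d e - 1) ^ k))" using lo_int by (intro sum.cong) auto
    finally show ?thesis unfolding L_def[abs_def] by simp
  qed
  have IU: "integral\<^sup>L M U = real (\<Sum>e\<in>exc c. d e ^ k)"
  proof -
    have "integral\<^sup>L M (\<lambda>x. \<Sum>e\<in>exc c. indicator (up e) x :: real) = (\<Sum>e\<in>exc c. integral\<^sup>L M (indicator (up e)))"
      using Bochner_Integration.integral_sum[where I="exc c" and M=M and f="\<lambda>e. indicator (up e)"] up_int by blast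
    also have "\<dots> = (\<Sum>e\<in>exc c. real (d e ^ k))" using up_int by (intro sum.cong) auto
    finally show ?thesis unfolding U_def[abs_def] by simp
  qed
  have spM: "space M = PiE K (\<lambda>_. {0..real n})"
    by (simp add: M_def space_PiM space_restrict_space)
  have pw: "L x \<le> f x \<and> f x \<le> U x \<and> 0 \<le> f x" if x: "x \<in> space M" for x
  proof -
    define a where "a = Min (x ` K)"
    define b where "b = Max (x ` K)"
    have fin: "finite (x ` K)" "x ` K \<noteq> {}" using K by auto
    have xK: "x j \<in> {0..real n}" if "j \<in> K" for j using x that spM by auto
    have xe: "x \<in> extensional K" using x spM by (auto simp: PiE_def)
    have a0: "0 \<le> a" unfolding a_def using xK by (subst Min_ge_iff[OF fin]) auto
    obtain j0 where j0: "j0 \<in> K" using K by auto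
    have ab: "a \<le> b" unfolding a_def b_def using fin j0 by (meson Max_ge Min_le image_eqI order.trans)
    have box: "x \<in> PiE K (\<lambda>_. {\<alpha>..\<beta>}) \<longleftrightarrow> \<alpha> \<le> a \<and> b \<le> \<beta>" for \<alpha> \<beta>
    proof -
      have "x \<in> PiE K (\<lambda>_. {\<alpha>..\<beta>}) \<longleftrightarrow> (\<forall>y\<in>x`K. \<alpha> \<le> y) \<and> (\<forall>y\<in>x`K. y \<le> \<beta>)"
        using xe by (auto simp: PiE_iff)
      also have "\<dots> \<longleftrightarrow> \<alpha> \<le> a \<and> b \<le> \<beta>"
        unfolding a_def b_def using Min_ge_iff[OF fin] Max_le_iff[OF fin] by simp
      finally show ?thesis .
    qed
    have "L x = (\<Sum>e\<in>exc c. if real (fst e) + 1 \<le> 2*a \<and> 2*b \<le> real (snd e) - 1 then 1 else 0)"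
      unfolding L_def lo_def indicator_def using box by (intro sum.cong) auto
    also have "\<dots> = real (card {e\<in>exc c. real (fst e) + 1 \<le> 2*a \<and> 2*b \<le> real (snd e) - 1})"
      by (rule card_filter_sum[symmetric]) (rule exc_finite)
    also have "\<dots> \<le> f x" unfolding f_def a_def[symmetric] b_def[symmetric]
      using lower_pw[of "2*a" "2*b"] a0 ab by simp
    finally have 1: "L x \<le> f x" .
    have "f x \<le> real (card {e\<in>exc c. real (fst e) \<le> 2*a \<and> 2*b \<le> real (snd e)})"
      unfolding f_def a_def[symmetric] b_def[symmetric]
      using upper_pw[of "2*a" "2*b"] a0 ab by simp
    also have "\<dots> = (\<Sum>e\<in>exc c. if real (fst e) \<le> 2*a \<and> 2*b \<le> real (snd e) then 1 else 0)"
      by (rule card_filter_sum) (rule exc_finite)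
    also have "\<dots> = U x"
      unfolding U_def up_def indicator_def using box by (intro sum.cong) auto
    finally have 2: "f x \<le> U x" .
    have "0 \<le> f x" unfolding f_def by (rule minf_nonneg) (rule Cf_nonneg)
    then show ?thesis using 1 2 by simp
  qed
  have fmeas: "f \<in> borel_measurable M"
  proof -
    have mi: "(\<lambda>x. x i) \<in> borel_measurable M" if "i \<in> K" for i
      unfolding M_def by (rule meas_comp[OF that])
    have "(\<lambda>x. Min ((\<lambda>i. x i) ` K)) \<in> borel_measurable M"
      by (rule borel_measurable_Min[OF K(1)]) (rule mi)
    moreover have "(\<lambda>x. Max ((\<lambda>i. x i) ` K)) \<in> borel_measurable M"
      by (rule borel_measurable_Max[OF K(1)]) (rule mi)
    ultimately show ?thesis
      unfolding f_def
      using borel_measurable_continuous_Pair[where f="\<lambda>x. Min (x ` K)" and M=M and g="\<lambda>x. Max (x ` K)"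
          and H="\<lambda>u w. minf (Cf c) (2 * u) (2 * w)"] minf_cont[OF Cf_nonneg Cf_lip]
      by simp
  qed
  have fint: "integrable M f"
    by (rule Bochner_Integration.integrable_bound[OF Uint fmeas]) (use pw in \<open>fastforce intro!: AE_I2\<close>)
  have "integral\<^sup>L M L \<le> integral\<^sup>L M f" by (rule Bochner_Integration.integral_mono[OF Lint fint]) (use pw in auto)
  moreover have "integral\<^sup>L M f \<le> integral\<^sup>L M U" by (rule Bochner_Integration.integral_mono[OF fint Uint]) (use pw in auto)
  moreover have "(\<Sum>e\<in>exc c. d e ^ k) = Dk t k"
    using sum_exc_Dk[OF assms, of t] by (simp add: d_def c_def case_prod_beta)
  moreover have "(\<Sum>e\<in>exc c. d e ^ k) \<le> (\<Sum>e\<in>exc c. (d e - 1) ^ k) + (n - 1) ^ k"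
    using sum_exc_low[OF assms, of t] by (simp add: d_def c_def n_def case_prod_beta)
  moreover have "real ((n - 1) ^ k) \<le> real n ^ k" by (simp add: power_mono)
  ultimately show ?thesis unfolding DD IL IU n_def
    by (smt (verit) of_nat_add of_nat_le_iff)
qed


end
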